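(* Let $k$ be a domain, $R = k[X_0,\dots,X_m]/J$ a graded domain with $m\ge 1$, $X_0,\dots,X_m$ variables of positive integer weights $A_0,\dots,A_m$ and $J$ a homogeneous ideal, let $A=\operatorname{lcm}(A_0,\dots,A_m)$, $I=R_{\ge mA}$, and let $a_0,\dots,a_m$ be the positive integers with $a_iA_i=A$. Let $p\ge 2$ be an integer and assume $I^{p-1}=R_{\ge (p-1)mA}$. Let $c_0,\dots,c_m$ be nonnegative integers with $c_0A_0+\dots+c_mA_m\ge pmA$ (so the monomial $X_0^{c_0}\cdots X_m^{c_m}$ lies in $R_{\ge pmA}$). Fix $n$ with $1\le n\le m$ and suppose $a_i\le c_i$ for all $0\le i<n$; for each such $i$ let $k_i$ be the unique positive integer with $k_ia_i\le c_i<(k_i+1)a_i$. Then: (1) if $k_0+\dots+k_{n-1}\le m-1$, then $a_j\le c_j$ for some $j$ with $n\le j\le m$; (2) if $k_0+\dots+k_{n-1}\ge m$, then $X_0^{c_0}\cdots X_m^{c_m}\in I^p$.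
   Context: $R$ is $\mathbb N$-graded via $\deg X_i=A_i$, and $X_i$ also denotes its image in $R$. For a nonnegative integer $\alpha$, $R_{\ge\alpha}$ denotes the ideal of $R$ generated by all homogeneous elements of degree at least $\alpha$. *)

theory Defs
  imports "HOL-Library.Poly_Mapping"
begin

text \<open>Polynomials over a coefficient ring k in the variables X_0, X_1, ... are
  represented as finitely supported maps from monomials (exponent vectors) to coefficients.\<close>
type_synonym 'k mpoly = "(nat \<Rightarrow>\<^sub>0 nat) \<Rightarrow>\<^sub>0 'k"

definition polys_in :: "nat \<Rightarrow> 'k::comm_ring_1 mpoly set" where
  "polys_in m = {f. \<forall>\<mu>\<in>Poly_Mapping.keys f. Poly_Mapping.keys \<mu> \<subseteq> {..m}}"

definition Var :: "nat \<Rightarrow> 'k::comm_ring_1 mpoly" where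
  "Var i = Poly_Mapping.single (Poly_Mapping.single i 1) 1"

definition wdeg :: "(nat \<Rightarrow> nat) \<Rightarrow> (nat \<Rightarrow>\<^sub>0 nat) \<Rightarrow> nat" where
  "wdeg A \<mu> = (\<Sum>i\<in>Poly_Mapping.keys \<mu>. Poly_Mapping.lookup \<mu> i * A i)"

definition homog :: "(nat \<Rightarrow> nat) \<Rightarrow> nat \<Rightarrow> 'k::comm_ring_1 mpoly \<Rightarrow> bool" where
  "homog A d f \<longleftrightarrow> (\<forall>\<mu>\<in>Poly_Mapping.keys f. wdeg A \<mu> = d)"

definition hcomp :: "(nat \<Rightarrow> nat) \<Rightarrow> nat \<Rightarrow> 'k::comm_ring_1 mpoly \<Rightarrow> 'k mpoly" where
  "hcomp A d f = Poly_Mapping.mapp (\<lambda>\<mu> c. if wdeg A \<mu> = d then c else 0) f"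

definition is_ideal :: "'a::comm_ring_1 set \<Rightarrow> bool" where
  "is_ideal I \<longleftrightarrow> 0 \<in> I \<and> (\<forall>x\<in>I. \<forall>y\<in>I. x + y \<in> I) \<and> (\<forall>r. \<forall>x\<in>I. r * x \<in> I)"

definition gen_ideal :: "'a::comm_ring_1 set \<Rightarrow> 'a set" where
  "gen_ideal S = \<Inter>{I. is_ideal I \<and> S \<subseteq> I}"

definition ideal_mult :: "'a::comm_ring_1 set \<Rightarrow> 'a set \<Rightarrow> 'a set" where
  "ideal_mult I J = gen_ideal {x * y | x y. x \<in> I \<and> y \<in> J}"

fun ideal_pow :: "'a::comm_ring_1 set \<Rightarrow> nat \<Rightarrow> 'a set" where
  "ideal_pow I 0 = UNIV"
| "ideal_pow I (Suc n) = ideal_mult I (ideal_pow I n)"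

text \<open>R is presented as k[X_0,...,X_m]/J via a surjective ring homomorphism
  \<pi> from k[X_0,...,X_m] onto R whose kernel J is a homogeneous ideal.\<close>
definition graded_presentation ::
  "nat \<Rightarrow> (nat \<Rightarrow> nat) \<Rightarrow> ('k::comm_ring_1 mpoly \<Rightarrow> 'r::comm_ring_1) \<Rightarrow> bool" where
  "graded_presentation m A \<pi> \<longleftrightarrow>
     \<pi> 1 = 1 \<and>
     (\<forall>f\<in>polys_in m. \<forall>g\<in>polys_in m. \<pi> (f + g) = \<pi> f + \<pi> g \<and> \<pi> (f * g) = \<pi> f * \<pi> g) \<and>
     \<pi> ` polys_in m = UNIV \<and>
     (\<forall>f\<in>polys_in m. \<pi> f = 0 \<longrightarrow> (\<forall>d. \<pi> (hcomp A d f) = 0))"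

definition R_ge :: "nat \<Rightarrow> (nat \<Rightarrow> nat) \<Rightarrow> ('k::comm_ring_1 mpoly \<Rightarrow> 'r::comm_ring_1) \<Rightarrow> nat \<Rightarrow> 'r set" where
  "R_ge m A \<pi> \<alpha> = gen_ideal {\<pi> f | f d. f \<in> polys_in m \<and> homog A d f \<and> \<alpha> \<le> d}"

end

theory Submission
  imports Defs
begin

definition mon :: "(nat \<Rightarrow> nat) \<Rightarrow> nat set \<Rightarrow> 'k::comm_ring_1 mpoly" where
  "mon b S = Poly_Mapping.single (\<Sum>i\<in>S. Poly_Mapping.single i (b i)) 1"

lemma lookup_monexp:
  assumes "finite S"
  shows "Poly_Mapping.lookup (\<Sum>i\<in>S. Poly_Mapping.single i (b i)) j = (if j \<in> S then b j else 0)"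
  using assms by (simp add: lookup_sum lookup_single when_def if_distrib sum.If_cases cong: if_cong)

lemma keys_monexp:
  assumes "finite S"
  shows "Poly_Mapping.keys (\<Sum>i\<in>S. Poly_Mapping.single i (b i)) \<subseteq> S"
  using lookup_monexp[OF assms, of b] by (auto simp: in_keys_iff split: if_splits)

lemma mon_polys_in:
  assumes "S \<subseteq> {..m}"
  shows "(mon b S :: 'k::idom mpoly) \<in> polys_in m"
proof -
  have "finite S" using assms finite_subset by blast
  then show ?thesis using keys_monexp[of S b] assms
    unfolding polys_in_def mon_def by auto
qed

lemma wdeg_monexp:
  assumes "finite S"
  shows "wdeg A (\<Sum>i\<in>S. Poly_Mapping.single i (b i)) = (\<Sum>i\<in>S. b i * A i)"
proof -
  let ?mu = "\<Sum>i\<in>S. Poly_Mapping.single i (b i)"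
  have "wdeg A ?mu = (\<Sum>i\<in>Poly_Mapping.keys ?mu. Poly_Mapping.lookup ?mu i * A i)"
    by (simp add: wdeg_def)
  also have "\<dots> = (\<Sum>i\<in>S. Poly_Mapping.lookup ?mu i * A i)"
    apply (rule sum.mono_neutral_left)
    using assms keys_monexp[OF assms] by (auto simp: in_keys_iff)
  also have "\<dots> = (\<Sum>i\<in>S. b i * A i)"
    using lookup_monexp[OF assms, of b] by simp
  finally show ?thesis .
qed

lemma homog_mon:
  assumes "finite S"
  shows "homog A (\<Sum>i\<in>S. b i * A i) (mon b S :: 'k::idom mpoly)"
  using wdeg_monexp[OF assms] unfolding homog_def mon_def by simp

lemma pi_single_pow:
  assumes pres: "graded_presentation m A \<pi>" and x: "x \<le> m"
  shows "\<pi> (Poly_Mapping.single (Poly_Mapping.single x k) (1::'k::idom)) = \<pi> (Var x) ^ k"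
proof (induction k)
  case 0
  then show ?case using pres by (simp add: graded_presentation_def one_poly_mapping.abs_eq[symmetric]
        single_zero)
next
  case (Suc k)
  have e: "Poly_Mapping.single (Poly_Mapping.single x (Suc k)) (1::'k)
     = Var x * Poly_Mapping.single (Poly_Mapping.single x k) 1"
    by (simp add: Var_def mult_single single_add[symmetric])
  have v: "(Var x :: 'k mpoly) \<in> polys_in m" using x by (simp add: Var_def polys_in_def)
  have w: "Poly_Mapping.single (Poly_Mapping.single x k) (1::'k) \<in> polys_in m"
    using x by (simp add: polys_in_def)
  show ?case using pres v w Suc unfolding e graded_presentation_def by simp
qed

lemma pi_mon:
  assumes pres: "graded_presentation m A \<pi>" and S: "S \<subseteq> {..m}"
  shows "\<pi> (mon b S :: 'k::idom mpoly) = (\<Prod>i\<in>S. \<pi> (Var i) ^ b i)"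
proof -
  have "finite S" using S finite_subset by blast
  then show ?thesis using S
  proof (induction S rule: finite_induct)
    case empty
    then show ?case using pres by (simp add: mon_def graded_presentation_def)
  next
    case (insert x F)
    have e: "(mon b (insert x F) :: 'k mpoly) = Poly_Mapping.single (Poly_Mapping.single x (b x)) 1 * mon b F"
      using insert by (simp add: mon_def mult_single)
    have w: "Poly_Mapping.single (Poly_Mapping.single x (b x)) (1::'k) \<in> polys_in m"
      using insert by (simp add: polys_in_def)
    have v: "(mon b F :: 'k mpoly) \<in> polys_in m" using insert mon_polys_in by auto
    have "\<pi> (mon b (insert x F) :: 'k mpoly) = \<pi> (Poly_Mapping.single (Poly_Mapping.single x (b x)) (1::'k)) * \<pi> (mon b F :: 'k mpoly)"
      using pres v w unfolding e graded_presentation_def by simp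
    then show ?case using insert pi_single_pow[OF pres, of x "b x"] by simp
  qed
qed

lemma gen_ideal_sub: "S \<subseteq> gen_ideal S"
  unfolding gen_ideal_def by auto

lemma R_ge_mem:
  fixes \<pi> :: "'k::idom mpoly \<Rightarrow> 'r::comm_ring_1"
  assumes pres: "graded_presentation m A \<pi>" and d: "\<alpha> \<le> (\<Sum>i\<le>m. b i * A i)"
  shows "(\<Prod>i\<le>m. \<pi> (Var i) ^ b i) \<in> R_ge m A \<pi> \<alpha>"
proof -
  have "(\<Prod>i\<le>m. \<pi> (Var i) ^ b i) = \<pi> (mon b {..m} :: 'k mpoly)"
    using pi_mon[OF pres] by simp
  moreover have "(mon b {..m} :: 'k mpoly) \<in> polys_in m" by (rule mon_polys_in) auto
  moreover have "homog A (\<Sum>i\<le>m. b i * A i) (mon b {..m} :: 'k mpoly)" by (rule homog_mon) auto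
  ultimately show ?thesis unfolding R_ge_def using d
    by (intro subsetD[OF gen_ideal_sub]) blast
qed

lemma choose_sub:
  fixes f :: "nat \<Rightarrow> nat"
  shows "M \<le> (\<Sum>i<n. f i) \<Longrightarrow> \<exists>e. (\<forall>i. e i \<le> f i) \<and> (\<Sum>i<n. e i) = M"
proof (induction n arbitrary: M)
  case 0
  then show ?case by (intro exI[of _ "\<lambda>_. 0"]) auto
next
  case (Suc n)
  let ?t = "min M (f n)"
  have "M - ?t \<le> (\<Sum>i<n. f i)" using Suc.prems by auto
  then obtain e where e: "\<forall>i. e i \<le> f i" "(\<Sum>i<n. e i) = M - ?t" using Suc.IH by blast
  have "(\<Sum>i<n. (e(n := ?t)) i) = (\<Sum>i<n. e i)" by (rule sum.cong) auto
  then show ?case using e by (intro exI[of _ "e(n := ?t)"]) auto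
qed

theorem mainTheorem3:
  fixes \<pi> :: "'k::idom mpoly \<Rightarrow> 'r::idom"
    and m p n :: nat
    and A c kk :: "nat \<Rightarrow> nat"
  assumes pres: "graded_presentation m A \<pi>"
    and m1: "1 \<le> m"
    and Apos: "\<forall>i\<le>m. 0 < A i"
    and p2: "2 \<le> p"
    and Ipow: "ideal_pow (R_ge m A \<pi> (m * Lcm (A ` {..m}))) (p - 1)
               = R_ge m A \<pi> ((p - 1) * m * Lcm (A ` {..m}))"
    and cdeg: "(\<Sum>i\<le>m. c i * A i) \<ge> p * m * Lcm (A ` {..m})"
    and n: "1 \<le> n" "n \<le> m"
    and ac: "\<forall>i<n. Lcm (A ` {..m}) div A i \<le> c i"
    and kk: "\<forall>i<n. 0 < kk i \<and> kk i * (Lcm (A ` {..m}) div A i) \<le> c i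
                   \<and> c i < (kk i + 1) * (Lcm (A ` {..m}) div A i)"
  shows "((\<Sum>i<n. kk i) \<le> m - 1 \<longrightarrow>
            (\<exists>j. n \<le> j \<and> j \<le> m \<and> Lcm (A ` {..m}) div A j \<le> c j))
       \<and> ((\<Sum>i<n. kk i) \<ge> m \<longrightarrow>
            (\<Prod>i\<le>m. \<pi> (Var i) ^ c i) \<in> ideal_pow (R_ge m A \<pi> (m * Lcm (A ` {..m}))) p)"
proof -
  define L where "L = Lcm (A ` {..m})"
  have aL: "L div A i * A i = L" if "i \<le> m" for i
  proof -
    have "A i dvd L" unfolding L_def using that by (intro dvd_Lcm) auto
    then show ?thesis by simp
  qed
  have part1: "\<exists>j. n \<le> j \<and> j \<le> m \<and> L div A j \<le> c j" if sk: "(\<Sum>i<n. kk i) \<le> m - 1"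
  proof (rule ccontr)
    assume nj: "\<not> ?thesis"
    define g where "g i = (if i < n then (kk i + 1) * L else L)" for i
    have lt: "c i * A i < g i" if "i \<in> {..m}" for i
    proof (cases "i < n")
      case True
      have "c i < (kk i + 1) * (L div A i)" using kk True unfolding L_def by blast
      then have "c i * A i < (kk i + 1) * (L div A i) * A i"
        using Apos that by (intro mult_less_mono1) auto
      also have "\<dots> = (kk i + 1) * L" using that by (simp only: mult.assoc aL atMost_iff)
      finally show ?thesis using True by (simp add: g_def)
    next
      case False
      have "c i < L div A i" using nj False that by auto
      then have "c i * A i < L div A i * A i" using Apos that by (intro mult_less_mono1) auto
      also have "L div A i * A i = L" using aL that by simp
      finally show ?thesis using False by (simp add: g_def)
    qed
    have "(\<Sum>i\<le>m. c i * A i) < (\<Sum>i\<le>m. g i)"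
      by (rule sum_strict_mono) (use lt in auto)
    also have "(\<Sum>i\<le>m. g i) = (\<Sum>i\<le>m. L + (if i < n then kk i * L else 0))"
      by (rule sum.cong) (auto simp: g_def)
    also have "\<dots> = (m + 1) * L + (\<Sum>i\<le>m. (if i < n then kk i * L else 0))"
      by (simp add: sum.distrib)
    also have "(\<Sum>i\<le>m. (if i < n then kk i * L else 0)) = (\<Sum>i<n. kk i * L)"
      by (rule sum.mono_neutral_cong_right) (use n in auto)
    also have "\<dots> = (\<Sum>i<n. kk i) * L" by (simp add: sum_distrib_right)
    also have "(m + 1) * L + (\<Sum>i<n. kk i) * L \<le> (m + 1) * L + (m - 1) * L"
      using sk by simp
    also have "\<dots> = (m + 1 + (m - 1)) * L" by (simp only: add_mult_distrib)
    also have "\<dots> = 2 * m * L" using m1 by simp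
    also have "\<dots> \<le> p * m * L" using p2 by (intro mult_right_mono) auto
    finally show False using cdeg unfolding L_def by simp
  qed
  have part2: "(\<Prod>i\<le>m. \<pi> (Var i) ^ c i) \<in> ideal_pow (R_ge m A \<pi> (m * L)) p"
    if sk: "(\<Sum>i<n. kk i) \<ge> m"
  proof -
    obtain e where e: "\<forall>i. e i \<le> kk i" "(\<Sum>i<n. e i) = m" using choose_sub[OF sk] by blast
    define b where "b i = (if i < n then e i * (L div A i) else 0)" for i
    have bc: "b i \<le> c i" for i
    proof (cases "i < n")
      case True
      have "e i * (L div A i) \<le> kk i * (L div A i)" using e by simp
      also have "\<dots> \<le> c i" using kk True unfolding L_def by auto
      finally show ?thesis using True by (simp add: b_def)
    qed (simp add: b_def)
    have db: "(\<Sum>i\<le>m. b i * A i) = m * L"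
    proof -
      have "(\<Sum>i\<le>m. b i * A i) = (\<Sum>i\<le>m. if i < n then e i * L else 0)"
        by (rule sum.cong) (use aL n in \<open>auto simp: b_def mult.assoc\<close>)
      also have "\<dots> = (\<Sum>i<n. e i * L)"
        by (rule sum.mono_neutral_cong_right) (use n in auto)
      also have "\<dots> = (\<Sum>i<n. e i) * L" by (simp add: sum_distrib_right)
      also have "\<dots> = m * L" using e(2) by simp
      finally show ?thesis .
    qed
    have dc: "(\<Sum>i\<le>m. (c i - b i) * A i) = (\<Sum>i\<le>m. c i * A i) - m * L"
    proof -
      have "(\<Sum>i\<le>m. (c i - b i) * A i) + (\<Sum>i\<le>m. b i * A i) = (\<Sum>i\<le>m. c i * A i)"
        by (simp add: sum.distrib[symmetric] add_mult_distrib[symmetric] bc)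
      then show ?thesis using db by simp
    qed
    have x: "(\<Prod>i\<le>m. \<pi> (Var i) ^ b i) \<in> R_ge m A \<pi> (m * L)"
      by (rule R_ge_mem[OF pres]) (simp add: db)
    have "(p - 1) * m * L \<le> (\<Sum>i\<le>m. (c i - b i) * A i)"
    proof -
      have h1: "(p - 1) * m * L = p * m * L - m * L" by (simp add: diff_mult_distrib)
      have h2: "p * m * L \<le> (\<Sum>i\<le>m. c i * A i)" using cdeg unfolding L_def .
      show ?thesis unfolding dc h1 using h2 by linarith
    qed
    then have y: "(\<Prod>i\<le>m. \<pi> (Var i) ^ (c i - b i)) \<in> ideal_pow (R_ge m A \<pi> (m * L)) (p - 1)"
      using Ipow unfolding L_def[symmetric] by (simp add: R_ge_mem[OF pres])
    have eq: "(\<Prod>i\<le>m. \<pi> (Var i) ^ c i) = (\<Prod>i\<le>m. \<pi> (Var i) ^ b i) * (\<Prod>i\<le>m. \<pi> (Var i) ^ (c i - b i))"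
    proof -
      have "(\<Prod>i\<le>m. \<pi> (Var i) ^ c i) = (\<Prod>i\<le>m. \<pi> (Var i) ^ b i * \<pi> (Var i) ^ (c i - b i))"
        by (rule prod.cong) (simp_all add: power_add[symmetric] bc)
      also have "\<dots> = (\<Prod>i\<le>m. \<pi> (Var i) ^ b i) * (\<Prod>i\<le>m. \<pi> (Var i) ^ (c i - b i))"
        by (rule prod.distrib)
      finally show ?thesis .
    qed
    have ip: "ideal_pow (R_ge m A \<pi> (m * L)) p = ideal_mult (R_ge m A \<pi> (m * L)) (ideal_pow (R_ge m A \<pi> (m * L)) (p - 1))"
      using p2 by (cases p) auto
    show ?thesis unfolding eq ip ideal_mult_def using x y
      by (intro subsetD[OF gen_ideal_sub]) blast
  qed
  show ?thesis using part1 part2 unfolding L_def by blast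
qed

end
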